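(* Let $n \ge 1$ and $a \in \mathbb{N}$ with $a^2 \le n$. Then the set of diagonal marginal tracial states on $M_n(\mathbb{C}) \otimes M_n(\mathbb{C})$ that are extremal points of $\Gamma(n)$ and have rank exactly $a$ is dense (in the norm topology of the finite-dimensional space of linear functionals on $M_n(\mathbb{C}) \otimes M_n(\mathbb{C})$) in the set of all diagonal marginal tracial states on $M_n(\mathbb{C}) \otimes M_n(\mathbb{C})$ of rank at most $a$.
   Context: $\mathrm{tr}$ is the normalized trace on $M_n(\mathbb{C})$ and ${}^tB$ the transpose with respect to a fixed orthonormal basis. $UCPT(n)$ is the convex set of unital, completely positive, trace-preserving linear maps $M_n(\mathbb{C}) \to M_n(\mathbb{C})$. $\Gamma(n)$ is the convex set of states $\rho$ on $M_n(\mathbb{C}) \otimes M_n(\mathbb{C})$ with $\rho(A \otimes I) = \mathrm{tr}(A)$ and $\rho(I\otimes B) = \mathrm{tr}(B)$ for all $A,B$ (marginal tracial states). The map $\pi: UCPT(n) \to \Gamma(n)$, $\pi(\varphi)(A\otimes B) = \mathrm{tr}(\varphi(A)\,{}^tB)$, is a bijection. The rank of a state is the rank of its density matrix. A linear map $\varphi$ on $M_n(\mathbb{C})$ is diagonal if $\varphi(A) = C \circ A$ (Schur/entrywise product) for some $C \in M_n(\mathbb{C})$; a marginal tracial state is diagonal if it equals $\pi(\varphi)$ for a diagonal $\varphi \in UCPT(n)$. *)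

theory Defs
  imports "HOL-Analysis.Analysis"
begin

text \<open>Matrices in M_n(C) are complex^'n^'n for a finite index type 'n (n = CARD('n)).
  M_n(C) \<otimes> M_n(C) is identified with M_{n^2}(C) = complex^('n*'n)^('n*'n) via the Kronecker product.
  A state on M_n \<otimes> M_n is represented by its density matrix D: rho(X) = trace (D ** X).\<close>

type_synonym 'n cmat = "complex^'n^'n"
type_synonym 'n tmat = "complex^('n \<times> 'n)^('n \<times> 'n)"

definition kron :: "'n::finite cmat \<Rightarrow> 'n cmat \<Rightarrow> 'n tmat" where
  "kron A B = (\<chi> r c. A$(fst r)$(fst c) * B$(snd r)$(snd c))"

definition ntr :: "'n::finite cmat \<Rightarrow> complex" where
  "ntr A = trace A / of_nat CARD('n)"

definition psd :: "complex^'m^'m \<Rightarrow> bool" where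
  "psd M \<longleftrightarrow> (\<forall>x::complex^'m.
     let s = (\<Sum>i\<in>UNIV. \<Sum>j\<in>UNIV. cnj (x$i) * M$i$j * x$j) in s \<in> \<real> \<and> 0 \<le> Re s)"

definition density :: "'n::finite tmat \<Rightarrow> bool" where
  "density D \<longleftrightarrow> psd D \<and> trace D = 1"

definition state_of :: "'n::finite tmat \<Rightarrow> 'n tmat \<Rightarrow> complex" where
  "state_of D X = trace (D ** X)"

definition Gamma :: "'n::finite tmat set" where
  "Gamma = {D. density D \<and>
     (\<forall>A. state_of D (kron A (mat 1)) = ntr A) \<and>
     (\<forall>B. state_of D (kron (mat 1) B) = ntr B)}"

definition psd_block :: "nat \<Rightarrow> (nat \<Rightarrow> nat \<Rightarrow> 'n::finite cmat) \<Rightarrow> bool" where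
  "psd_block k A \<longleftrightarrow> (\<forall>v :: nat \<Rightarrow> complex^'n.
     let s = (\<Sum>i<k. \<Sum>j<k. \<Sum>p\<in>UNIV. \<Sum>q\<in>UNIV. cnj (v i $ p) * A i j $ p $ q * v j $ q)
     in s \<in> \<real> \<and> 0 \<le> Re s)"

definition completely_positive :: "('n::finite cmat \<Rightarrow> 'n cmat) \<Rightarrow> bool" where
  "completely_positive \<phi> \<longleftrightarrow>
     (\<forall>k A. psd_block k A \<longrightarrow> psd_block k (\<lambda>i j. \<phi> (A i j)))"

definition UCPT :: "('n::finite cmat \<Rightarrow> 'n cmat) set" where
  "UCPT = {\<phi>. (\<forall>A B. \<phi> (A + B) = \<phi> A + \<phi> B) \<and> (\<forall>c A. \<phi> (c *s A) = c *s \<phi> A) \<and>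
              completely_positive \<phi> \<and> \<phi> (mat 1) = mat 1 \<and> (\<forall>A. ntr (\<phi> A) = ntr A)}"

text \<open>pi(phi): the state with rho(A \<otimes> B) = tr(phi(A) B^t); D represents pi(phi) iff this holds
  for all A, B (product tensors span M_n \<otimes> M_n)\<close>
definition represents_pi :: "'n::finite tmat \<Rightarrow> ('n cmat \<Rightarrow> 'n cmat) \<Rightarrow> bool" where
  "represents_pi D \<phi> \<longleftrightarrow> (\<forall>A B. state_of D (kron A B) = ntr (\<phi> A ** transpose B))"

definition schur :: "'n::finite cmat \<Rightarrow> 'n cmat \<Rightarrow> 'n cmat" where
  "schur C A = (\<chi> i j. C$i$j * A$i$j)"

definition diagonal_map :: "('n::finite cmat \<Rightarrow> 'n cmat) \<Rightarrow> bool" where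
  "diagonal_map \<phi> \<longleftrightarrow> (\<exists>C. \<phi> = schur C)"

definition diagonal_states :: "'n::finite tmat set" where
  "diagonal_states = {D \<in> Gamma. \<exists>\<phi>\<in>UCPT. diagonal_map \<phi> \<and> represents_pi D \<phi>}"

end

theory Submission
  imports Defs
begin

definition qf :: "complex^'m^'m \<Rightarrow> complex^'m \<Rightarrow> complex" where
  "qf M x = (\<Sum>i\<in>UNIV. \<Sum>j\<in>UNIV. cnj (x$i) * M$i$j * x$j)"
definition bf :: "complex^'m^'m \<Rightarrow> complex^'m \<Rightarrow> complex^'m \<Rightarrow> complex" where
  "bf M x y = (\<Sum>i\<in>UNIV. \<Sum>j\<in>UNIV. cnj (x$i) * M$i$j * y$j)"

lemma psd_qf: "psd M \<longleftrightarrow> (\<forall>x. qf M x \<in> \<real> \<and> 0 \<le> Re (qf M x))"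
  by (simp add: psd_def qf_def Let_def)

lemma qf_expand: "qf M (x + c *s y) = qf M x + c * bf M x y + cnj c * bf M y x + cnj c * c * qf M y"
  unfolding qf_def bf_def
  by (simp add: algebra_simps sum.distrib sum_distrib_left)

lemma real_quad_zero:
  fixes r g :: real
  assumes "\<And>t. 0 \<le> t * r + t^2 * g" "0 \<le> g"
  shows "r = 0"
proof (rule ccontr)
  assume "r \<noteq> 0"
  define h where "h = g + 1"
  have h: "h > 0" using assms(2) h_def by simp
  define t where "t = - r / (2 * h)"
  have "0 \<le> t * r + t^2 * g" by (rule assms(1))
  also have "t * r + t^2 * g \<le> t * r + t^2 * h" by (simp add: h_def algebra_simps)
  also have "t * r + t^2 * h = - (r^2 / (4*h))"
    using h by (simp add: t_def power2_eq_square field_simps)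
  also have "\<dots> < 0" using \<open>r \<noteq> 0\<close> h by simp
  finally show False by simp
qed

lemma psd_qf_zero:
  assumes "psd P" "qf P x = 0"
  shows "bf P x y = 0 \<and> bf P y x = 0"
proof -
  let ?a = "bf P x y" and ?b = "bf P y x" and ?g = "qf P y"
  have P: "\<And>z. qf P z \<in> \<real> \<and> 0 \<le> Re (qf P z)" using assms(1) psd_qf by blast
  have g: "?g \<in> \<real>" "0 \<le> Re ?g" using P by auto
  have e: "\<And>c. qf P (x + c *s y) = c * ?a + cnj c * ?b + cnj c * c * ?g"
    using qf_expand[of P x _ y] assms(2) by simp
  have r1: "\<And>t::real. 0 \<le> t * Re (?a + ?b) + t^2 * Re ?g"
  proof -
    fix t :: real
    have "0 \<le> Re (qf P (x + complex_of_real t *s y))" using P by blast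
    then show "0 \<le> t * Re (?a + ?b) + t^2 * Re ?g" by (simp add: e power2_eq_square algebra_simps)
  qed
  have i1: "Im (?a + ?b) = 0"
  proof -
    have "qf P (x + 1 *s y) \<in> \<real>" using P by blast
    then have "Im (qf P (x + 1 *s y)) = 0" using complex_is_Real_iff by blast
    moreover have "Im ?g = 0" using g complex_is_Real_iff by blast
    moreover note e[of 1]
    ultimately show ?thesis by (simp only:) simp
  qed
  have r2: "\<And>t::real. 0 \<le> t * (- Im (?a - ?b)) + t^2 * Re ?g"
  proof -
    fix t :: real
    have "0 \<le> Re (qf P (x + (\<i> * complex_of_real t) *s y))" using P by blast
    then show "0 \<le> t * (- Im (?a - ?b)) + t^2 * Re ?g" by (simp add: e power2_eq_square algebra_simps)
  qed
  have i2: "Re (?a - ?b) = 0"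
  proof -
    have "qf P (x + \<i> *s y) \<in> \<real>" using P by blast
    then have "Im (qf P (x + \<i> *s y)) = 0" using complex_is_Real_iff by blast
    moreover have "Im ?g = 0" using g complex_is_Real_iff by blast
    moreover note e[of "\<i>"]
    ultimately show ?thesis by (simp only:) simp
  qed
  have "Re (?a + ?b) = 0" using real_quad_zero[OF r1 g(2)] .
  moreover have "Im (?a - ?b) = 0" using real_quad_zero[OF r2 g(2)] by simp
  ultimately show ?thesis using i1 i2 by (simp add: complex_eq_iff)
qed

lemma bf_axis_left: "bf M (axis i 1) y = (\<Sum>j\<in>UNIV. M$i$j * y$j)"
proof -
  have "bf M (axis i 1) y = (\<Sum>k\<in>UNIV. if k = i then (\<Sum>j\<in>UNIV. M$k$j * y$j) else 0)"
    unfolding bf_def axis_def by (rule sum.cong) auto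
  then show ?thesis by simp
qed

lemma bf_axis_right: "bf M x (axis j 1) = (\<Sum>i\<in>UNIV. cnj (x$i) * M$i$j)"
proof -
  have "bf M x (axis j 1) = (\<Sum>i\<in>UNIV. \<Sum>k\<in>UNIV. if k = j then cnj (x$i) * M$i$k else 0)"
    unfolding bf_def axis_def by (intro sum.cong) auto
  then show ?thesis by simp
qed

lemma bf_axis: "bf M (axis i 1) (axis j 1) = M$i$j"
  unfolding bf_axis_left by (simp add: axis_def if_distrib[of "\<lambda>x. _ * x"] cong: if_cong)

lemma qf_axis: "qf M (axis i 1) = M$i$i"
  using bf_axis[of M i i] by (simp add: bf_def qf_def)

lemma psd_diag: assumes "psd M" shows "M$i$i \<in> \<real>" "0 \<le> Re (M$i$i)"
  using assms qf_axis[of M i] unfolding psd_qf by metis+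

lemma psd_herm: assumes "psd M" shows "M$j$k = cnj (M$k$j)"
proof -
  have P: "\<And>z. qf M z \<in> \<real>" using assms psd_qf by blast
  have e: "\<And>c. qf M (axis j 1 + c *s axis k 1) = M$j$j + c * M$j$k + cnj c * M$k$j + cnj c * c * M$k$k"
    by (simp add: qf_expand bf_axis qf_axis)
  have dj: "Im (M$j$j) = 0" "Im (M$k$k) = 0" using psd_diag[OF assms] complex_is_Real_iff by blast+
  have "Im (qf M (axis j 1 + 1 *s axis k 1)) = 0" using P complex_is_Real_iff by blast
  then have 1: "Im (M$j$k) + Im (M$k$j) = 0" using e[of 1] dj by simp
  have "Im (qf M (axis j 1 + \<i> *s axis k 1)) = 0" using P complex_is_Real_iff by blast
  then have 2: "Re (M$j$k) - Re (M$k$j) = 0" using e[of "\<i>"] dj by simp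
  show ?thesis using 1 2 by (simp add: complex_eq_iff)
qed

lemma psd_diag_zero:
  assumes "psd M" "\<And>i. M$i$i = 0" shows "M = 0"
proof -
  have "\<And>i j. M$i$j = 0"
    using psd_qf_zero[OF assms(1), of "axis i 1" "axis j 1" for i j] assms(2)
    by (simp add: qf_axis bf_axis)
  then show ?thesis by (simp add: vec_eq_iff)
qed

definition schurc :: "complex^'m^'m \<Rightarrow> 'm \<Rightarrow> complex^'m^'m" where
  "schurc M j = M - (\<chi> i k. M$i$j * M$j$k / M$j$j)"

lemma psd_schurc:
  assumes "psd M" "M$j$j \<noteq> 0" shows "psd (schurc M j)"
proof -
  define d where "d = M$j$j"
  have dr: "cnj d = d" using psd_diag[OF assms(1), of j] d_def Reals_cnj_iff by blast
  have "qf (schurc M j) x = qf M (x + (- bf M (axis j 1) x / d) *s axis j 1)" for x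
  proof -
    define m where "m = bf M (axis j 1) x"
    define A where "A = bf M x (axis j 1)"
    have "qf (schurc M j) x = qf M x - A * m / d"
      unfolding schurc_def qf_def A_def m_def d_def bf_axis_left bf_axis_right
      by (simp add: algebra_simps sum_subtractf sum_divide_distrib sum_distrib_left sum_distrib_right)
    also have "\<dots> = qf M (x + (- m / d) *s axis j 1)"
      unfolding qf_expand using assms(2) dr
      by (simp add: qf_axis A_def[symmetric] m_def[symmetric] d_def[symmetric] field_simps)
    finally show ?thesis by (simp add: m_def)
  qed
  then show ?thesis using assms(1) by (simp add: psd_qf)
qed

definition outer :: "complex^'m \<Rightarrow> complex^'m^'m" where
  "outer w = (\<chi> i k. w$i * cnj (w$k))"

lemma rows_zero_coord:
  assumes "\<And>v. v \<in> S \<Longrightarrow> v$j = (0::'a::field)"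
  shows "\<And>v. v \<in> vec.span S \<Longrightarrow> v$j = 0"
proof -
  have "vec.span S \<subseteq> {v. v$j = 0}"
    by (rule vec.span_minimal) (use assms in \<open>auto simp: vec.subspace_def\<close>)
  then show "\<And>v. v \<in> vec.span S \<Longrightarrow> v$j = 0" by auto
qed

lemma rank_schurc:
  fixes M :: "complex^'m^'m"
  assumes "M$j$j \<noteq> 0" shows "rank (schurc M j) < rank M"
proof -
  have sub: "rows (schurc M j) \<subseteq> vec.span (rows M)"
  proof
    fix v assume "v \<in> rows (schurc M j)"
    then obtain i where v: "v = row i (schurc M j)" by (auto simp: rows_def)
    have "v = row i M - (M$i$j / M$j$j) *s row j M"
      by (simp add: v row_def schurc_def vec_eq_iff)
    moreover have "row i M \<in> rows M" "row j M \<in> rows M" by (auto simp: rows_def)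
    ultimately show "v \<in> vec.span (rows M)"
      by (simp add: vec.span_diff vec.span_scale vec.span_base)
  qed
  have z: "\<And>v. v \<in> vec.span (rows (schurc M j)) \<Longrightarrow> v$j = 0"
    by (rule rows_zero_coord) (use assms in \<open>auto simp: rows_def row_def schurc_def\<close>)
  have "row j M \<in> vec.span (rows M)" by (rule vec.span_base) (auto simp: rows_def)
  moreover have "row j M \<notin> vec.span (rows (schurc M j))"
    using z[of "row j M"] assms by (auto simp: row_def)
  moreover have "vec.span (rows (schurc M j)) \<subseteq> vec.span (rows M)"
    using sub vec.span_mono vec.span_span by (metis)
  ultimately have "vec.span (rows (schurc M j)) \<subset> vec.span (rows M)" by blast
  then show ?thesis unfolding row_rank_def_gen by (rule vec.dim_psubset)
qed

lemma schurc_outer: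
  assumes "psd M" "M$j$j \<noteq> 0"
  shows "M = schurc M j + outer ((\<chi> i. M$i$j / complex_of_real (sqrt (Re (M$j$j)))))"
proof -
  define d where "d = M$j$j"
  have dr: "d = complex_of_real (Re d)" using psd_diag[OF assms(1), of j] d_def
    by (simp add: complex_eq_iff complex_is_Real_iff)
  have dp: "Re d > 0" using psd_diag[OF assms(1), of j] assms(2) d_def dr
    by (metis less_eq_real_def of_real_0)
  define q where "q = complex_of_real (sqrt (Re d))"
  have "sqrt (Re d) * sqrt (Re d) = Re d" using dp by simp
  then have qq: "q * q = d" unfolding q_def by (metis dr of_real_mult)
  have qc: "cnj q = q" by (simp add: q_def)
  have e: "M$i$j * M$j$k / d = M$i$j / q * cnj (M$k$j / q)" for i k
  proof -
    have "cnj (M$k$j / q) = M$j$k / q" using psd_herm[OF assms(1), of j k] qc by simp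
    then show ?thesis by (simp add: qq[symmetric])
  qed
  show ?thesis
    unfolding schurc_def outer_def d_def[symmetric] q_def[symmetric]
    by (simp add: vec_eq_iff e)
qed

lemma rank_zero_mat: assumes "rank (M::'a::field^'m^'m) = 0" shows "M = 0"
proof -
  have r: "rows M \<subseteq> {0}" using assms unfolding row_rank_def_gen vec.dim_eq_0 .
  have "row i M = 0" for i using r by (auto simp: rows_def)
  then show ?thesis by (simp add: vec_eq_iff row_def)
qed

lemma psd_factor:
  fixes T :: "'b set"
  assumes "finite T"
  shows "\<And>M::complex^'m^'m. psd M \<Longrightarrow> rank M \<le> card T \<Longrightarrow> \<exists>w. M = (\<Sum>t\<in>T. outer (w t))"
  using assms
proof (induction T rule: finite_induct)
  case empty
  then show ?case using rank_zero_mat by auto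
next
  case (insert x T M)
  show ?case
  proof (cases "\<forall>i. M$i$i = 0")
    case True
    then have "M = 0" using psd_diag_zero insert by blast
    then show ?thesis by (intro exI[of _ "\<lambda>_. 0"]) (simp add: outer_def vec_eq_iff)
  next
    case False
    then obtain j where j: "M$j$j \<noteq> 0" by blast
    have "rank (schurc M j) \<le> card T"
      using rank_schurc[OF j] insert(1,2,5) by simp
    then obtain w where w: "schurc M j = (\<Sum>t\<in>T. outer (w t))"
      using insert.IH[OF psd_schurc[OF insert(4) j]] by blast
    define u where "u = (\<chi> i. M$i$j / complex_of_real (sqrt (Re (M$j$j))))"
    have s1: "(\<Sum>t\<in>insert x T. outer ((w(x := u)) t)) = outer u + (\<Sum>t\<in>T. outer ((w(x := u)) t))"
      using insert(1,2) by (simp add: sum.insert)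
    have s2: "(\<Sum>t\<in>T. outer ((w(x := u)) t)) = (\<Sum>t\<in>T. outer (w t))"
      using insert(2) by (intro sum.cong) auto
    have "M = schurc M j + outer u" using schurc_outer[OF insert(4) j] unfolding u_def .
    also have "\<dots> = outer u + (\<Sum>t\<in>T. outer ((w(x := u)) t))" unfolding s2 w by (rule add.commute)
    also have "\<dots> = (\<Sum>t\<in>insert x T. outer ((w(x := u)) t))" using s1 by (simp only:)
    finally have "M = (\<Sum>t\<in>insert x T. outer ((w(x := u)) t))" .
    then show ?thesis by (rule exI[where x="w(x := u)"])
  qed
qed

definition Eij :: "'n::finite \<Rightarrow> 'n \<Rightarrow> 'n cmat" where
  "Eij p q = (\<chi> i j. if i = p \<and> j = q then 1 else 0)"

lemma trace_kron: "trace (D ** kron A B) = (\<Sum>r\<in>UNIV. \<Sum>c\<in>UNIV. D$r$c * (A$fst c$fst r * B$snd c$snd r))"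
  by (simp add: trace_def matrix_matrix_mult_def kron_def)

lemma sum_diag:
  fixes f :: "'n::finite \<times> 'n \<Rightarrow> 'a::comm_monoid_add"
  assumes "\<And>p q. p \<noteq> q \<Longrightarrow> f (p,q) = 0"
  shows "(\<Sum>r\<in>UNIV. f r) = (\<Sum>p\<in>UNIV. f (p,p))"
proof -
  have "(\<Sum>r\<in>UNIV. f r) = (\<Sum>r\<in>range (\<lambda>p. (p,p)). f r)"
    by (rule sum.mono_neutral_right) (auto intro: assms)
  also have "\<dots> = (\<Sum>p\<in>UNIV. f (p,p))"
    by (subst sum.reindex) (auto simp: inj_on_def)
  finally show ?thesis .
qed

lemma trace_kron_E: "trace (D ** kron (Eij p p) (Eij q q)) = D$(p,q)$(p,q)"
proof -
  have "trace (D ** kron (Eij p p) (Eij q q)) =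
        (\<Sum>r\<in>UNIV. \<Sum>c\<in>UNIV. if c = (p,q) then (if r = (p,q) then D$r$c else 0) else 0)"
    unfolding trace_kron Eij_def by (intro sum.cong) auto
  then show ?thesis by simp
qed

lemma ntr_schur_E:
  fixes C :: "'n::finite cmat"
  shows "ntr (schur C (Eij p p) ** transpose (Eij q q)) = (if p = q then C$p$p else 0) / of_nat CARD('n::finite)"
proof -
  have "schur C (Eij p p) ** transpose (Eij q q) = (\<chi> i j. if i = p \<and> j = q \<and> p = q then C$p$p else 0)"
    unfolding schur_def Eij_def transpose_def matrix_matrix_mult_def
    by (auto simp: vec_eq_iff if_distrib[of "\<lambda>x. x * _"] if_distrib[of "\<lambda>x. _ * x"] cong: if_cong)
  then show ?thesis by (simp add: ntr_def trace_def)
qed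

lemma ntr_E: "ntr (Eij p p :: 'n::finite cmat) = 1 / of_nat CARD('n)"
  by (simp add: ntr_def trace_def Eij_def)

lemma diagonal_state_entries:
  assumes "D \<in> (diagonal_states :: 'n::finite tmat set)"
  shows "\<And>p q. p \<noteq> q \<Longrightarrow> D$(p,q)$(p,q) = 0"
    and "\<And>p. D$(p,p)$(p,p) = 1 / of_nat CARD('n)"
proof -
  obtain \<phi> where ph: "\<phi> \<in> UCPT" "diagonal_map \<phi>" "represents_pi D \<phi>"
    using assms by (auto simp: diagonal_states_def)
  then obtain C where C: "\<phi> = schur C" by (auto simp: diagonal_map_def)
  have "schur C (mat 1) = mat 1" using ph(1) C by (simp add: UCPT_def)
  then have c1: "C$p$p = 1" for p
  proof -
    have "(schur C (mat 1))$p$p = C$p$p" by (simp add: schur_def mat_def)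
    moreover have "(mat 1 :: 'n cmat)$p$p = 1" by (simp add: mat_def)
    ultimately show ?thesis using \<open>schur C (mat 1) = mat 1\<close> by simp
  qed
  have e: "D$(p,q)$(p,q) = (if p = q then C$p$p else 0) / of_nat CARD('n)" for p q
  proof -
    have "state_of D (kron (Eij p p) (Eij q q)) = ntr (\<phi> (Eij p p) ** transpose (Eij q q))"
      using ph(3) unfolding represents_pi_def by blast
    then show ?thesis unfolding state_of_def trace_kron_E C ntr_schur_E .
  qed
  show "\<And>p q. p \<noteq> q \<Longrightarrow> D$(p,q)$(p,q) = 0" using e by simp
  show "\<And>p. D$(p,p)$(p,p) = 1 / of_nat CARD('n)" using e c1 by simp
qed

definition Gm :: "complex^'n^'n \<Rightarrow> 'n \<Rightarrow> 'n \<Rightarrow> complex" where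
  "Gm U p r = (\<Sum>t\<in>UNIV. cnj (U$p$t) * U$r$t)"

definition Fm :: "complex^'n^'n \<Rightarrow> 'n::finite tmat" where
  "Fm U = (\<chi> r c. if fst r = snd r \<and> fst c = snd c then Gm U (fst r) (fst c) / of_nat CARD('n) else 0)"

lemma Fm_off1: "fst r \<noteq> snd r \<Longrightarrow> Fm U $ r $ c = 0" by (simp add: Fm_def)
lemma Fm_off2: "fst c \<noteq> snd c \<Longrightarrow> Fm U $ r $ c = 0" by (simp add: Fm_def)
lemma Fm_diag: fixes U :: "complex^'n::finite^'n" shows "Fm U $ (p,p) $ (s,s) = Gm U p s / of_nat CARD('n)" by (simp add: Fm_def)

lemma cnj_mult_self: "cnj z * z = complex_of_real ((cmod z)^2)"
  by (metis complex_norm_square mult.commute)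

lemma sum_cnj_real: "(\<Sum>t\<in>S. cnj (z t) * z t) = complex_of_real (\<Sum>t\<in>S. (cmod (z t))^2)"
  unfolding cnj_mult_self of_real_sum ..

lemma sum_cnj_norm: "(\<Sum>t\<in>UNIV. cnj (x$t) * x$t) = complex_of_real ((norm x)^2)"
proof -
  have "(norm x)^2 = (\<Sum>t\<in>UNIV. (cmod (x$t))^2)"
    unfolding norm_vec_def L2_set_def by (simp add: sum_nonneg)
  then show ?thesis unfolding sum_cnj_real by simp
qed

lemma Gm_unit: "norm (U$p) = 1 \<Longrightarrow> Gm U p p = 1"
  unfolding Gm_def using sum_cnj_norm[of "U$p"] by simp

lemma qf_Fm: fixes U :: "complex^'n::finite^'n" shows "qf (Fm U) x = (\<Sum>t\<in>UNIV. cnj (\<Sum>p\<in>UNIV. U$p$t * x$(p,p)) * (\<Sum>r\<in>UNIV. U$r$t * x$(r,r))) / of_nat CARD('n)"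
proof -
  have "qf (Fm U) x = (\<Sum>p\<in>UNIV. \<Sum>s\<in>UNIV. cnj (x$(p,p)) * Fm U $ (p,p) $ (s,s) * x$(s,s))"
    unfolding qf_def
    by (subst sum_diag) (auto simp: Fm_off1 Fm_off2 intro!: sum.neutral sum.cong sum_diag)
  also have "\<dots> = (\<Sum>p\<in>UNIV. \<Sum>s\<in>UNIV. \<Sum>t\<in>UNIV. cnj (U$p$t * x$(p,p)) * (U$s$t * x$(s,s))) / of_nat CARD('n)"
    unfolding Fm_diag Gm_def
    by (simp add: sum_divide_distrib sum_distrib_left sum_distrib_right algebra_simps)
  also have "\<dots> = (\<Sum>t\<in>UNIV. cnj (\<Sum>p\<in>UNIV. U$p$t * x$(p,p)) * (\<Sum>r\<in>UNIV. U$r$t * x$(r,r))) / of_nat CARD('n)"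
  proof -
    have "(\<Sum>t\<in>UNIV. cnj (\<Sum>p\<in>UNIV. U$p$t * x$(p,p)) * (\<Sum>r\<in>UNIV. U$r$t * x$(r,r)))
        = (\<Sum>t\<in>UNIV. \<Sum>p\<in>UNIV. \<Sum>s\<in>UNIV. cnj (U$p$t * x$(p,p)) * (U$s$t * x$(s,s)))"
      by (simp only: cnj_sum sum_distrib_left sum_distrib_right) (rule sum.cong[OF refl], rule sum.swap)
    also have "\<dots> = (\<Sum>p\<in>UNIV. \<Sum>t\<in>UNIV. \<Sum>s\<in>UNIV. cnj (U$p$t * x$(p,p)) * (U$s$t * x$(s,s)))"
      by (rule sum.swap)
    also have "\<dots> = (\<Sum>p\<in>UNIV. \<Sum>s\<in>UNIV. \<Sum>t\<in>UNIV. cnj (U$p$t * x$(p,p)) * (U$s$t * x$(s,s)))"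
      by (rule sum.cong[OF refl], rule sum.swap)
    finally show ?thesis by simp
  qed
  finally show ?thesis .
qed

lemma psd_Fm: fixes U :: "complex^'n::finite^'n" shows "psd (Fm U)"
proof -
  have "qf (Fm U) x \<in> \<real> \<and> 0 \<le> Re (qf (Fm U) x)" for x
  proof -
    define z where "z t = (\<Sum>p\<in>UNIV. U$p$t * x$(p,p))" for t
    have "qf (Fm U) x = complex_of_real ((\<Sum>t\<in>UNIV. (cmod (z t))^2) / real CARD('n))"
      unfolding qf_Fm z_def[symmetric] sum_cnj_real by simp
    then show ?thesis by (simp add: sum_nonneg)
  qed
  then show ?thesis by (simp add: psd_qf)
qed

lemma trace_Fm: fixes U :: "complex^'n::finite^'n" assumes "\<And>p. norm (U$p) = 1" shows "trace (Fm U) = 1"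
proof -
  have "trace (Fm U) = (\<Sum>p\<in>UNIV. Fm U $ (p,p) $ (p,p))"
    unfolding trace_def by (rule sum_diag) (simp add: Fm_off1)
  also have "\<dots> = (\<Sum>p::'n\<in>UNIV. 1 / of_nat CARD('n))" by (simp add: Fm_diag Gm_unit assms)
  finally show ?thesis by simp
qed

lemma state_Fm: fixes U :: "complex^'n::finite^'n"
  shows "state_of (Fm U) (kron A B) = (\<Sum>p\<in>UNIV. \<Sum>s\<in>UNIV. Gm U p s * (A$s$p * B$s$p)) / of_nat CARD('n)"
proof -
  have "state_of (Fm U) (kron A B) = (\<Sum>p\<in>UNIV. \<Sum>s\<in>UNIV. Fm U $ (p,p) $ (s,s) * (A$s$p * B$s$p))"
    unfolding state_of_def trace_kron
  proof -
    have "(\<Sum>r\<in>UNIV. \<Sum>c\<in>UNIV. Fm U $ r $ c * (A $ fst c $ fst r * B $ snd c $ snd r))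
      = (\<Sum>r\<in>UNIV. \<Sum>s\<in>UNIV. Fm U $ r $ (s,s) * (A $ s $ fst r * B $ s $ snd r))"
      by (intro sum.cong refl, subst sum_diag) (auto simp: Fm_off2)
    also have "\<dots> = (\<Sum>p\<in>UNIV. \<Sum>s\<in>UNIV. Fm U $ (p,p) $ (s,s) * (A $ s $ p * B $ s $ p))"
      by (subst sum_diag) (auto simp: Fm_off1)
    finally show "(\<Sum>r\<in>UNIV. \<Sum>c\<in>UNIV. Fm U $ r $ c * (A $ fst c $ fst r * B $ snd c $ snd r))
      = (\<Sum>p\<in>UNIV. \<Sum>s\<in>UNIV. Fm U $ (p,p) $ (s,s) * (A $ s $ p * B $ s $ p))" .
  qed
  then show ?thesis by (simp add: Fm_diag sum_divide_distrib)
qed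

lemma marg1_Fm: fixes U :: "complex^'n::finite^'n" assumes "\<And>p. norm (U$p) = 1"
  shows "state_of (Fm U) (kron A (mat 1)) = ntr A"
proof -
  have "(\<Sum>p\<in>UNIV. \<Sum>s\<in>UNIV. Gm U p s * (A$s$p * (mat 1 :: 'n cmat)$s$p)) = (\<Sum>p\<in>UNIV. A$p$p)"
  proof (rule sum.cong[OF refl])
    fix p
    have "(\<Sum>s\<in>UNIV. Gm U p s * (A$s$p * (mat 1 :: 'n cmat)$s$p)) = (\<Sum>s\<in>UNIV. if s = p then Gm U p s * A$s$p else 0)"
      by (rule sum.cong) (auto simp: mat_def)
    then show "(\<Sum>s\<in>UNIV. Gm U p s * (A$s$p * (mat 1 :: 'n cmat)$s$p)) = A$p$p"
      by (simp add: Gm_unit assms)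
  qed
  then show ?thesis unfolding state_Fm by (simp add: ntr_def trace_def)
qed

lemma marg2_Fm: fixes U :: "complex^'n::finite^'n" assumes "\<And>p. norm (U$p) = 1"
  shows "state_of (Fm U) (kron (mat 1) B) = ntr B"
proof -
  have "(\<Sum>p\<in>UNIV. \<Sum>s\<in>UNIV. Gm U p s * ((mat 1 :: 'n cmat)$s$p * B$s$p)) = (\<Sum>p\<in>UNIV. B$p$p)"
  proof (rule sum.cong[OF refl])
    fix p
    have "(\<Sum>s\<in>UNIV. Gm U p s * ((mat 1 :: 'n cmat)$s$p * B$s$p)) = (\<Sum>s\<in>UNIV. if s = p then Gm U p s * B$s$p else 0)"
      by (rule sum.cong) (auto simp: mat_def)
    then show "(\<Sum>s\<in>UNIV. Gm U p s * ((mat 1 :: 'n cmat)$s$p * B$s$p)) = B$p$p"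
      by (simp add: Gm_unit assms)
  qed
  then show ?thesis unfolding state_Fm by (simp add: ntr_def trace_def)
qed

definition Cm :: "complex^'n^'n \<Rightarrow> complex^'n^'n" where
  "Cm U = (\<chi> s p. Gm U p s)"

lemma pi_Fm: fixes U :: "complex^'n::finite^'n"
  shows "represents_pi (Fm U) (schur (Cm U))"
  unfolding represents_pi_def
proof (intro allI)
  fix A B :: "'n cmat"
  have "ntr (schur (Cm U) A ** transpose B) = (\<Sum>s\<in>UNIV. \<Sum>p\<in>UNIV. Gm U p s * (A$s$p * B$s$p)) / of_nat CARD('n)"
    by (simp add: ntr_def trace_def matrix_matrix_mult_def schur_def transpose_def Cm_def algebra_simps)
  also have "\<dots> = (\<Sum>p\<in>UNIV. \<Sum>s\<in>UNIV. Gm U p s * (A$s$p * B$s$p)) / of_nat CARD('n)"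
    by (subst sum.swap) simp
  finally show "state_of (Fm U) (kron A B) = ntr (schur (Cm U) A ** transpose B)"
    unfolding state_Fm by simp
qed

lemma sum5_swap:
  fixes f :: "nat \<Rightarrow> nat \<Rightarrow> 'n::finite \<Rightarrow> 'n \<Rightarrow> 't::finite \<Rightarrow> complex"
  shows "(\<Sum>i<k. \<Sum>j<k. \<Sum>p\<in>UNIV. \<Sum>q\<in>UNIV. \<Sum>t\<in>UNIV. f i j p q t)
       = (\<Sum>t\<in>UNIV. \<Sum>i<k. \<Sum>j<k. \<Sum>p\<in>UNIV. \<Sum>q\<in>UNIV. f i j p q t)"
proof -
  have "(\<Sum>i<k. \<Sum>j<k. \<Sum>p\<in>UNIV. \<Sum>q\<in>UNIV. \<Sum>t\<in>UNIV. f i j p q t)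
      = (\<Sum>i<k. \<Sum>j<k. \<Sum>p\<in>UNIV. \<Sum>t\<in>UNIV. \<Sum>q\<in>UNIV. f i j p q t)"
    by (intro sum.cong refl, rule sum.swap)
  also have "\<dots> = (\<Sum>i<k. \<Sum>j<k. \<Sum>t\<in>UNIV. \<Sum>p\<in>UNIV. \<Sum>q\<in>UNIV. f i j p q t)"
    by (intro sum.cong refl, rule sum.swap)
  also have "\<dots> = (\<Sum>i<k. \<Sum>t\<in>UNIV. \<Sum>j<k. \<Sum>p\<in>UNIV. \<Sum>q\<in>UNIV. f i j p q t)"
    by (intro sum.cong refl, rule sum.swap)
  also have "\<dots> = (\<Sum>t\<in>UNIV. \<Sum>i<k. \<Sum>j<k. \<Sum>p\<in>UNIV. \<Sum>q\<in>UNIV. f i j p q t)"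
    by (rule sum.swap)
  finally show ?thesis .
qed

lemma cp_Cm: fixes U :: "complex^'n::finite^'n"
  shows "completely_positive (schur (Cm U))"
  unfolding completely_positive_def
proof (intro allI impI)
  fix k and A :: "nat \<Rightarrow> nat \<Rightarrow> 'n cmat"
  assume A: "psd_block k A"
  show "psd_block k (\<lambda>i j. schur (Cm U) (A i j))"
    unfolding psd_block_def Let_def
  proof (intro allI)
    fix v :: "nat \<Rightarrow> complex^'n"
    define w where "w t i = (\<chi> p. v i $ p * cnj (U$p$t))" for t i
    define S where "S t = (\<Sum>i<k. \<Sum>j<k. \<Sum>p\<in>UNIV. \<Sum>q\<in>UNIV. cnj (w t i $ p) * A i j $ p $ q * w t j $ q)" for t
    have St: "S t \<in> \<real> \<and> 0 \<le> Re (S t)" for t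
      using A unfolding psd_block_def Let_def S_def by blast
    have "(\<Sum>i<k. \<Sum>j<k. \<Sum>p\<in>UNIV. \<Sum>q\<in>UNIV. cnj (v i $ p) * schur (Cm U) (A i j) $ p $ q * v j $ q)
        = (\<Sum>i<k. \<Sum>j<k. \<Sum>p\<in>UNIV. \<Sum>q\<in>UNIV. \<Sum>t\<in>UNIV. cnj (w t i $ p) * A i j $ p $ q * w t j $ q)"
      unfolding schur_def Cm_def Gm_def w_def
      by (simp add: sum_distrib_left sum_distrib_right algebra_simps)
    also have "\<dots> = (\<Sum>t\<in>UNIV. S t)" unfolding S_def by (rule sum5_swap)
    finally have e: "(\<Sum>i<k. \<Sum>j<k. \<Sum>p\<in>UNIV. \<Sum>q\<in>UNIV. cnj (v i $ p) * schur (Cm U) (A i j) $ p $ q * v j $ q) = (\<Sum>t\<in>UNIV. S t)" .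
    show "(\<Sum>i<k. \<Sum>j<k. \<Sum>p\<in>UNIV. \<Sum>q\<in>UNIV. cnj (v i $ p) * schur (Cm U) (A i j) $ p $ q * v j $ q) \<in> \<real> \<and>
          0 \<le> Re (\<Sum>i<k. \<Sum>j<k. \<Sum>p\<in>UNIV. \<Sum>q\<in>UNIV. cnj (v i $ p) * schur (Cm U) (A i j) $ p $ q * v j $ q)"
      unfolding e using St by (auto intro: sum_nonneg)
  qed
qed

lemma UCPT_Cm: fixes U :: "complex^'n::finite^'n" assumes "\<And>p. norm (U$p) = 1"
  shows "schur (Cm U) \<in> UCPT"
  unfolding UCPT_def
proof (intro CollectI conjI allI)
  show "schur (Cm U) (A + B) = schur (Cm U) A + schur (Cm U) B" for A B
    by (simp add: schur_def vec_eq_iff algebra_simps)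
  show "schur (Cm U) (c *s A) = c *s schur (Cm U) A" for c A
    by (simp add: schur_def vec_eq_iff algebra_simps)
  show "completely_positive (schur (Cm U))" by (rule cp_Cm)
  show "schur (Cm U) (mat 1) = mat 1"
    by (simp add: schur_def vec_eq_iff Cm_def mat_def Gm_unit assms)
  show "ntr (schur (Cm U) A) = ntr A" for A
    by (simp add: schur_def ntr_def trace_def Cm_def Gm_unit assms)
qed

lemma Fm_diag_state: fixes U :: "complex^'n::finite^'n" assumes "\<And>p. norm (U$p) = 1"
  shows "Fm U \<in> diagonal_states" "Fm U \<in> Gamma"
proof -
  show G: "Fm U \<in> Gamma"
    unfolding Gamma_def density_def
    using psd_Fm trace_Fm[OF assms] marg1_Fm[OF assms] marg2_Fm[OF assms] by blast
  show "Fm U \<in> diagonal_states"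
    unfolding diagonal_states_def using G UCPT_Cm[OF assms] pi_Fm
    by (auto simp: diagonal_map_def)
qed

definition Rk :: "complex^'n \<Rightarrow> complex^('n \<times> 'n)" where
  "Rk x = (\<chi> z. x$(fst z) * cnj (x$(snd z)))"

definition Em :: "'n \<Rightarrow> 'n \<Rightarrow> complex^('n::finite \<times> 'n)" where
  "Em t s = axis (t,s) 1"

lemma span_range_repr:
  fixes f :: "'i::finite \<Rightarrow> 'a::field^'m"
  assumes "x \<in> vec.span (range f)"
  shows "\<exists>c. x = (\<Sum>j\<in>UNIV. c j *s f j)"
proof -
  have "vec.span (range f) \<subseteq> {x. \<exists>c. x = (\<Sum>j\<in>UNIV. c j *s f j)}"
  proof (rule vec.span_minimal)
    show "range f \<subseteq> {x. \<exists>c. x = (\<Sum>j\<in>UNIV. c j *s f j)}"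
    proof clarify
      fix i
      have "f i = (\<Sum>j\<in>UNIV. (if j = i then 1 else 0) *s f j)"
        by (simp add: if_distrib[of "\<lambda>a. a *s _"] cong: if_cong)
      then show "\<exists>c. f i = (\<Sum>j\<in>UNIV. c j *s f j)" by (rule exI[where x="\<lambda>j. if j = i then 1 else 0"])
    qed
    show "vec.subspace {x. \<exists>c. x = (\<Sum>j\<in>UNIV. c j *s f j)}"
      unfolding vec.subspace_def
    proof (intro conjI ballI allI)
      show "0 \<in> {x. \<exists>c. x = (\<Sum>j\<in>UNIV. c j *s f j)}"
        by (intro CollectI exI[of _ "\<lambda>_. 0"]) simp
      fix x y assume "x \<in> {x. \<exists>c. x = (\<Sum>j\<in>UNIV. c j *s f j)}" "y \<in> {x. \<exists>c. x = (\<Sum>j\<in>UNIV. c j *s f j)}"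
      then obtain c1 c2 where "x = (\<Sum>j\<in>UNIV. c1 j *s f j)" "y = (\<Sum>j\<in>UNIV. c2 j *s f j)" by blast
      then have "x + y = (\<Sum>j\<in>UNIV. (c1 j + c2 j) *s f j)"
        by (simp add: vec.scale_left_distrib sum.distrib)
      then show "x + y \<in> {x. \<exists>c. x = (\<Sum>j\<in>UNIV. c j *s f j)}" by (intro CollectI exI[where x="\<lambda>j. c1 j + c2 j"])
    next
      fix a x assume "x \<in> {x. \<exists>c. x = (\<Sum>j\<in>UNIV. c j *s f j)}"
      then obtain c1 where "x = (\<Sum>j\<in>UNIV. c1 j *s f j)" by blast
      then have "a *s x = (\<Sum>j\<in>UNIV. (a * c1 j) *s f j)"
        by (simp add: vec.scale_sum_right)
      then show "a *s x \<in> {x. \<exists>c. x = (\<Sum>j\<in>UNIV. c j *s f j)}" by (intro CollectI exI[where x="\<lambda>j. a * c1 j"])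
    qed
  qed
  then show ?thesis using assms by blast
qed

lemma bf_diff_right: "bf M x (y1 - y2) = bf M x y1 - bf M x y2"
  unfolding bf_def by (simp add: algebra_simps sum_subtractf)

lemma bf_diff_left: "bf M (x1 - x2) y = bf M x1 y - bf M x2 y"
  unfolding bf_def by (simp add: algebra_simps sum_subtractf)

definition lift :: "complex^'n \<Rightarrow> complex^('n \<times> 'n)" where
  "lift x = (\<chi> z. if fst z = snd z then x$(fst z) else 0)"

lemma bf_lift: fixes M :: "complex^('n::finite\<times>'n)^('n\<times>'n)"
  shows "bf M (lift x) (lift y) = (\<Sum>p\<in>UNIV. \<Sum>r\<in>UNIV. cnj (x$p) * M$(p,p)$(r,r) * y$r)"
proof -
  have "bf M (lift x) (lift y) = (\<Sum>a\<in>UNIV. \<Sum>r\<in>UNIV. cnj (lift x $ a) * M$a$(r,r) * y$r)"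
    unfolding bf_def by (intro sum.cong refl, subst sum_diag) (auto simp: lift_def)
  also have "\<dots> = (\<Sum>p\<in>UNIV. \<Sum>r\<in>UNIV. cnj (x$p) * M$(p,p)$(r,r) * y$r)"
    by (subst sum_diag) (auto simp: lift_def)
  finally show ?thesis .
qed

lemma qf_comb: "qf (a *\<^sub>R A + b *\<^sub>R B) x = complex_of_real a * qf A x + complex_of_real b * qf B x"
proof -
  have e: "(a *\<^sub>R A + b *\<^sub>R B)$i$j = complex_of_real a * A$i$j + complex_of_real b * B$i$j" for i j
    by (simp add: scaleR_conv_of_real[where 'a=complex])
  show ?thesis unfolding qf_def e by (simp add: algebra_simps sum.distrib sum_distrib_left)
qed

lemma trace_kron_E_I: "trace (D ** kron (Eij p p) (mat 1)) = (\<Sum>q\<in>UNIV. D$(p,q)$(p,q))"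
proof -
  have "trace (D ** kron (Eij p p) (mat 1)) =
        (\<Sum>r\<in>UNIV. \<Sum>c\<in>UNIV. if c = r then (if fst r = p then D$r$c else 0) else 0)"
    unfolding trace_kron Eij_def mat_def by (intro sum.cong) (auto simp: prod_eq_iff)
  also have "\<dots> = (\<Sum>r\<in>UNIV. if fst r = p then D$r$r else 0)" by simp
  also have "\<dots> = (\<Sum>r\<in>{p} \<times> UNIV. D$r$r)"
    by (rule sum.mono_neutral_cong_right) auto
  also have "\<dots> = (\<Sum>r\<in>(\<lambda>q. (p,q)) ` UNIV. D$r$r)"
    by (rule sum.cong) auto
  also have "\<dots> = (\<Sum>q\<in>UNIV. D$(p,q)$(p,q))"
    by (subst sum.reindex) (auto simp: inj_on_def)
  finally show ?thesis .
qed

lemma sum4_swap: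
  "(\<Sum>i\<in>A. \<Sum>j\<in>B. \<Sum>s\<in>C. \<Sum>t\<in>D. f i j s t) = (\<Sum>s\<in>C. \<Sum>t\<in>D. \<Sum>i\<in>A. \<Sum>j\<in>B. f i j s t)"
proof -
  have "(\<Sum>i\<in>A. \<Sum>j\<in>B. \<Sum>s\<in>C. \<Sum>t\<in>D. f i j s t) = (\<Sum>i\<in>A. \<Sum>s\<in>C. \<Sum>j\<in>B. \<Sum>t\<in>D. f i j s t)"
    by (intro sum.cong refl, rule sum.swap)
  also have "\<dots> = (\<Sum>s\<in>C. \<Sum>i\<in>A. \<Sum>j\<in>B. \<Sum>t\<in>D. f i j s t)" by (rule sum.swap)
  also have "\<dots> = (\<Sum>s\<in>C. \<Sum>i\<in>A. \<Sum>t\<in>D. \<Sum>j\<in>B. f i j s t)"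
    by (intro sum.cong refl, rule sum.swap)
  also have "\<dots> = (\<Sum>s\<in>C. \<Sum>t\<in>D. \<Sum>i\<in>A. \<Sum>j\<in>B. f i j s t)"
    by (intro sum.cong refl, rule sum.swap)
  finally show ?thesis .
qed

locale goodU =
  fixes U :: "complex^'n::finite^'n" and T :: "'n set"
  assumes unit: "\<And>p. norm (U$p) = 1"
    and supp: "\<And>p t. t \<notin> T \<Longrightarrow> U$p$t = 0"
    and spans: "\<And>t s. t \<in> T \<Longrightarrow> s \<in> T \<Longrightarrow> Em t s \<in> vec.span (range (\<lambda>j. Rk (U$j)))"
begin

lemma W_exists: "\<exists>W::'n \<Rightarrow> 'n \<Rightarrow> complex. (\<forall>s\<in>T. \<forall>t\<in>T. (\<Sum>j\<in>UNIV. U$j$s * W j t) = (if s = t then 1 else 0))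
    \<and> (\<forall>j t. t \<notin> T \<longrightarrow> W j t = 0)"
proof -
  have "\<forall>t\<in>T. \<exists>c. Em t t = (\<Sum>j\<in>UNIV. c j *s Rk (U$j))"
    using spans span_range_repr by blast
  then obtain cc where cc: "\<And>t. t \<in> T \<Longrightarrow> Em t t = (\<Sum>j\<in>UNIV. cc t j *s Rk (U$j))"
    by metis
  define W where "W j t = (if t \<in> T then cc t j * cnj (U$j$t) else 0)" for j t
  have "(\<Sum>j\<in>UNIV. U$j$s * W j t) = (if s = t then 1 else 0)" if "s \<in> T" "t \<in> T" for s t
  proof -
    have "(Em t t) $ (s,t) = (if s = t then 1 else 0)" by (simp add: Em_def axis_def)
    moreover have "(Em t t) $ (s,t) = (\<Sum>j\<in>UNIV. U$j$s * W j t)"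
      unfolding cc[OF that(2)] W_def using that by (simp add: Rk_def algebra_simps)
    ultimately show ?thesis by simp
  qed
  then show ?thesis by (intro exI[of _ W]) (auto simp: W_def)
qed


lemma D1_eq:
  assumes D1: "D1 \<in> Gamma" and D2: "D2 \<in> Gamma" and u: "0 < u" "u < 1"
    and comb: "Fm U = (1 - u) *\<^sub>R D1 + u *\<^sub>R D2"
  shows "D1 = Fm U"
proof -
  let ?F = "Fm U"
  let ?n = "of_nat CARD('n) :: complex"
  have p1: "psd D1" and p2: "psd D2" using D1 D2 by (auto simp: Gamma_def density_def)
  have pF: "psd ?F" by (rule psd_Fm)
  have K0: "qf D1 x = 0" if "qf ?F x = 0" for x
  proof -
    have q1: "qf D1 x \<in> \<real>" "0 \<le> Re (qf D1 x)" and q2: "0 \<le> Re (qf D2 x)"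
      using p1 p2 by (auto simp: psd_qf)
    have "0 = Re (qf ?F x)" using that by simp
    also have "\<dots> = (1 - u) * Re (qf D1 x) + u * Re (qf D2 x)"
      unfolding comb qf_comb by simp
    finally have "(1 - u) * Re (qf D1 x) + u * Re (qf D2 x) = 0" by simp
    moreover have "0 \<le> (1 - u) * Re (qf D1 x)" "0 \<le> u * Re (qf D2 x)"
      using q1 q2 u by auto
    ultimately have "(1 - u) * Re (qf D1 x) = 0" by linarith
    then have "Re (qf D1 x) = 0" using u by simp
    then show ?thesis using q1(1) by (simp add: complex_eq_iff complex_is_Real_iff)
  qed
  have off: "D1$r$c = 0 \<and> D1$c$r = 0" if "fst r \<noteq> snd r" for r c
  proof -
    have "qf ?F (axis r 1) = 0" using that by (simp add: qf_axis Fm_off1)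
    then have "qf D1 (axis r 1) = 0" by (rule K0)
    from psd_qf_zero[OF p1 this, of "axis c 1"] show ?thesis by (simp add: bf_axis)
  qed
  have diag: "D1$(p,p)$(p,p) = 1 / ?n" for p
  proof -
    have "state_of D1 (kron (Eij p p) (mat 1)) = ntr (Eij p p)"
      using D1 by (auto simp: Gamma_def)
    then have "(\<Sum>q\<in>UNIV. D1$(p,q)$(p,q)) = 1 / ?n"
      by (simp add: state_of_def trace_kron_E_I ntr_E)
    moreover have "(\<Sum>q\<in>UNIV. D1$(p,q)$(p,q)) = (\<Sum>q\<in>UNIV. if q = p then D1$(p,p)$(p,p) else 0)"
      by (rule sum.cong) (use off in auto)
    ultimately show ?thesis by simp
  qed
  define Km where "Km = (\<chi> p r. D1$(p,p)$(r,r) - ?F$(p,p)$(r,r))"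
  have bfKm: "bf Km x y = bf D1 (lift x) (lift y) - bf ?F (lift x) (lift y)" for x y
    unfolding bf_lift by (simp add: Km_def bf_def algebra_simps sum_subtractf)
  have kerV: "bf Km x y = 0 \<and> bf Km y x = 0" if x: "\<And>t. (\<Sum>r\<in>UNIV. U$r$t * x$r) = 0" for x y
  proof -
    have "(\<Sum>p\<in>UNIV. U$p$t * lift x$(p,p)) = 0" for t using x[of t] by (simp add: lift_def)
    then have qF: "qf ?F (lift x) = 0" by (simp add: qf_Fm)
    then have qD: "qf D1 (lift x) = 0" by (rule K0)
    show ?thesis unfolding bfKm
      using psd_qf_zero[OF pF qF, of "lift y"] psd_qf_zero[OF p1 qD, of "lift y"] by simp
  qed
  obtain W where W1: "\<And>s t. s \<in> T \<Longrightarrow> t \<in> T \<Longrightarrow> (\<Sum>j\<in>UNIV. U$j$s * W j t) = (if s = t then 1 else 0)"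
    and W0: "\<And>j t. t \<notin> T \<Longrightarrow> W j t = 0"
    using W_exists by blast
  define z where "z r = (\<chi> j. \<Sum>t\<in>UNIV. W j t * U$r$t)" for r
  have zker: "(\<Sum>j\<in>UNIV. U$j$s * (axis r 1 - z r)$j) = 0" for r s
  proof (cases "s \<in> T")
    case True
    have "(\<Sum>j\<in>UNIV. U$j$s * z r $ j) = (\<Sum>t\<in>UNIV. (\<Sum>j\<in>UNIV. U$j$s * W j t) * U$r$t)"
      unfolding z_def by (simp add: sum_distrib_left sum_distrib_right algebra_simps) (rule sum.swap)
    also have "\<dots> = (\<Sum>t\<in>UNIV. if t = s then U$r$t else 0)"
    proof (rule sum.cong[OF refl])
      fix t show "(\<Sum>j\<in>UNIV. U$j$s * W j t) * U$r$t = (if t = s then U$r$t else 0)"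
      proof (cases "t \<in> T")
        case True
        then show ?thesis using W1[OF \<open>s \<in> T\<close> True] by auto
      next
        case False
        then show ?thesis using supp[OF False, of r] W0[OF False] by auto
      qed
    qed
    also have "\<dots> = U$r$s" by simp
    finally have "(\<Sum>j\<in>UNIV. U$j$s * z r $ j) = U$r$s" .
    moreover have "(\<Sum>j\<in>UNIV. U$j$s * axis r 1 $ j) = U$r$s"
      by (simp add: axis_def if_distrib[of "\<lambda>a. _ * a"] cong: if_cong)
    ultimately show ?thesis by (simp add: algebra_simps sum_subtractf)
  next
    case False
    then show ?thesis using supp by simp
  qed
  have Km_z: "Km$p$r = bf Km (z p) (z r)" for p r
  proof -
    have "Km$p$r = bf Km (axis p 1) (axis r 1)" by (simp add: bf_axis)
    also have "\<dots> = bf Km (axis p 1) (z r)"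
      using kerV[OF zker, of r "axis p 1"] by (simp add: bf_diff_right)
    also have "\<dots> = bf Km (z p) (z r)"
      using kerV[OF zker, of p "z r"] by (simp add: bf_diff_left)
    finally show ?thesis .
  qed
  define N where "N s t = (\<Sum>i\<in>UNIV. \<Sum>j\<in>UNIV. cnj (W i s) * Km$i$j * W j t)" for s t
  have bf_z: "bf Km (z p) (z r) = (\<Sum>s\<in>UNIV. \<Sum>t\<in>UNIV. cnj (U$p$s) * N s t * U$r$t)" for p r
  proof -
    have "bf Km (z p) (z r) = (\<Sum>i\<in>UNIV. \<Sum>j\<in>UNIV. \<Sum>s\<in>UNIV. \<Sum>t\<in>UNIV. cnj (U$p$s) * (cnj (W i s) * Km$i$j * W j t) * U$r$t)"
      unfolding bf_def z_def by (simp add: sum_distrib_left sum_distrib_right algebra_simps)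
    also have "\<dots> = (\<Sum>s\<in>UNIV. \<Sum>t\<in>UNIV. \<Sum>i\<in>UNIV. \<Sum>j\<in>UNIV. cnj (U$p$s) * (cnj (W i s) * Km$i$j * W j t) * U$r$t)"
      by (rule sum4_swap)
    also have "\<dots> = (\<Sum>s\<in>UNIV. \<Sum>t\<in>UNIV. cnj (U$p$s) * N s t * U$r$t)"
      unfolding N_def by (simp add: sum_distrib_left sum_distrib_right)
    finally show ?thesis .
  qed
  have Kpp: "Km$p$p = 0" for p
    using diag[of p] by (simp add: Km_def Fm_diag Gm_unit unit)
  have Nz: "N s t = 0" for s t
  proof (cases "s \<in> T \<and> t \<in> T")
    case True
    define Phi where "Phi M = (\<Sum>a\<in>UNIV. \<Sum>b\<in>UNIV. N a b * M$(b,a))" for M :: "complex^('n\<times>'n)"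
    have Phi_lin: "Phi (\<Sum>j\<in>UNIV. c j *s f j) = (\<Sum>j\<in>UNIV. c j * Phi (f j))" for c f
    proof -
      have "Phi (\<Sum>j\<in>UNIV. c j *s f j) = (\<Sum>a\<in>UNIV. \<Sum>b\<in>UNIV. \<Sum>j\<in>UNIV. c j * (N a b * f j $ (b,a)))"
        unfolding Phi_def by (simp add: sum_distrib_left algebra_simps)
      also have "\<dots> = (\<Sum>j\<in>UNIV. \<Sum>a\<in>UNIV. \<Sum>b\<in>UNIV. c j * (N a b * f j $ (b,a)))"
        by (subst sum.swap, rule sum.cong[OF refl], rule sum.swap)
      also have "\<dots> = (\<Sum>j\<in>UNIV. c j * Phi (f j))"
        unfolding Phi_def by (simp add: sum_distrib_left)
      finally show ?thesis .
    qed
    have PhiR: "Phi (Rk (U$j)) = 0" for j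
    proof -
      have "Phi (Rk (U$j)) = (\<Sum>a\<in>UNIV. \<Sum>b\<in>UNIV. cnj (U$j$a) * N a b * U$j$b)"
        unfolding Phi_def Rk_def by (simp add: algebra_simps)
      also have "\<dots> = 0" using Kpp[of j] Km_z[of j j] bf_z[of j j] by simp
      finally show ?thesis .
    qed
    obtain c where c: "Em t s = (\<Sum>j\<in>UNIV. c j *s Rk (U$j))"
      using span_range_repr[OF spans[of t s]] True by blast
    have "Phi (Em t s) = N s t"
    proof -
      have "Phi (Em t s) = (\<Sum>a\<in>UNIV. \<Sum>b\<in>UNIV. if b = t then (if a = s then N a b else 0) else 0)"
        unfolding Phi_def Em_def axis_def by (intro sum.cong refl) auto
      then show ?thesis by simp
    qed
    moreover have "Phi (Em t s) = 0" unfolding c Phi_lin PhiR by simp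
    ultimately show ?thesis by simp
  next
    case False
    then have "s \<notin> T \<or> t \<notin> T" by simp
    then show ?thesis unfolding N_def using W0 by (elim disjE) simp_all
  qed
  have Kz: "Km$p$r = 0" for p r
    unfolding Km_z bf_z Nz by simp
  show "D1 = ?F"
  proof (clarsimp simp: vec_eq_iff)
    fix r c :: "'n \<times> 'n"
    show "D1$r$c = ?F$r$c"
    proof (cases "fst r = snd r \<and> fst c = snd c")
      case True
      then obtain p q where "r = (p,p)" "c = (q,q)" by (metis prod.collapse)
      then show ?thesis using Kz[of p q] by (simp add: Km_def)
    next
      case False
      show ?thesis
      proof (cases "fst r = snd r")
        case True
        then have "fst c \<noteq> snd c" using False by simp
        then show ?thesis using off[of c r] Fm_off2[of c U r] by simp
      next
        case False
        then show ?thesis using off[of r c] Fm_off1[of r U c] by simp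
      qed
    qed
  qed
qed

lemma Fm_extreme: "Fm U extreme_point_of Gamma"
  unfolding extreme_point_of_def
proof (intro conjI ballI)
  show "Fm U \<in> Gamma" using Fm_diag_state unit by blast
  fix D1 D2 :: "'n tmat" assume D1: "D1 \<in> Gamma" and D2: "D2 \<in> Gamma"
  show "Fm U \<notin> open_segment D1 D2"
  proof
    assume "Fm U \<in> open_segment D1 D2"
    then obtain u where ne: "D1 \<noteq> D2" and u: "0 < u" "u < 1"
      and comb: "Fm U = (1 - u) *\<^sub>R D1 + u *\<^sub>R D2"
      unfolding in_segment by blast
    have e1: "D1 = Fm U" by (rule D1_eq[OF D1 D2 u comb])
    have c2: "D1 = (1 - u) *\<^sub>R D1 + u *\<^sub>R D2" using comb by (simp only: e1[symmetric])
    have a: "D1 - (1 - u) *\<^sub>R D1 = ((1 - u) *\<^sub>R D1 + u *\<^sub>R D2) - (1 - u) *\<^sub>R D1"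
      using c2 by (rule arg_cong[where f="\<lambda>X. X - (1 - u) *\<^sub>R D1"])
    then have a': "D1 - (1 - u) *\<^sub>R D1 = u *\<^sub>R D2" by simp
    have b: "D1 - (1 - u) *\<^sub>R D1 = u *\<^sub>R D1" by (simp add: algebra_simps)
    have "u *\<^sub>R D2 = u *\<^sub>R D1" using a' b by metis
    then have "D2 = D1" using u by simp
    then have "D2 = Fm U" using e1 by simp
    with e1 ne show False by simp
  qed
qed

end

lemma norm_axis_gen: "norm (axis i (x::complex)) = norm x"
proof -
  have "(\<Sum>j\<in>UNIV. (norm (axis i x $ j))^2) = (\<Sum>j\<in>UNIV. if j = i then (norm x)^2 else 0)"
    by (rule sum.cong) (auto simp: axis_def)
  then show ?thesis unfolding norm_vec_def L2_set_def by simp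
qed

definition suppT :: "'n set \<Rightarrow> complex^'n \<Rightarrow> bool" where
  "suppT T x \<longleftrightarrow> (\<forall>t. t \<notin> T \<longrightarrow> x$t = 0)"

definition Ebasis :: "'n::finite set \<Rightarrow> (complex^('n\<times>'n)) set" where
  "Ebasis T = (\<lambda>z. axis z 1) ` (T \<times> T)"

lemma Ebasis_indep: "vec.independent (Ebasis T)"
  by (rule vec.independent_mono[OF independent_cart_basis]) (auto simp: Ebasis_def cart_basis_def)

lemma Ebasis_card: "card (Ebasis T) = card T * card T"
proof -
  have "inj_on (\<lambda>z. axis z (1::complex)) (T \<times> T)"
    by (rule inj_onI) (simp add: axis_eq_axis)
  then show ?thesis unfolding Ebasis_def by (simp add: card_image card_cartesian_product)
qed

lemma Em_in_Ebasis: "t \<in> T \<Longrightarrow> s \<in> T \<Longrightarrow> Em t s \<in> Ebasis T"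
  by (auto simp: Em_def Ebasis_def)

lemma supp_in_span_Ebasis:
  fixes N :: "complex^('n::finite\<times>'n)"
  assumes "\<And>z. z \<notin> T \<times> T \<Longrightarrow> N$z = 0"
  shows "N \<in> vec.span (Ebasis T)"
proof -
  have "N = (\<Sum>z\<in>UNIV. (N$z) *s axis z 1)" by (simp add: basis_expansion)
  also have "\<dots> = (\<Sum>z\<in>T \<times> T. (N$z) *s axis z 1)"
    by (rule sum.mono_neutral_right) (auto simp: assms)
  finally have e: "N = (\<Sum>z\<in>T \<times> T. (N$z) *s axis z 1)" .
  show ?thesis by (subst e, intro vec.span_sum vec.span_scale vec.span_base) (auto simp: Ebasis_def)
qed

lemma Rk_in_span_Ebasis: "suppT T x \<Longrightarrow> Rk x \<in> vec.span (Ebasis T)"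
  by (rule supp_in_span_Ebasis) (auto simp: Rk_def suppT_def)

definition Qf :: "complex^'n \<Rightarrow> complex^'n \<Rightarrow> complex^('n\<times>'n)" where
  "Qf a b = (\<chi> z. a$(fst z) * cnj (b$(snd z)) + b$(fst z) * cnj (a$(snd z)))"

lemma Qf_Rk: "Qf a b = Rk (v + a + b) - Rk (v + a) - Rk (v + b) + Rk v"
  by (simp add: Qf_def Rk_def vec_eq_iff algebra_simps)

lemma near_rank_one:
  fixes v :: "complex^'n::finite"
  assumes v: "suppT T v" and d: "\<delta> > 0"
    and H: "\<And>x. suppT T x \<Longrightarrow> norm (x - v) < \<delta> \<Longrightarrow> Rk x \<in> vec.span B"
  shows "Ebasis T \<subseteq> vec.span B"
proof
  fix E assume "E \<in> Ebasis T"
  then obtain t s where ts: "t \<in> T" "s \<in> T" and E: "E = axis (t,s) 1" by (auto simp: Ebasis_def)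
  define e where "e = \<delta> / 4"
  have e0: "e > 0" using d by (simp add: e_def)
  have Qin: "Qf a b \<in> vec.span B" if a: "suppT T a" "norm a = e" and b: "suppT T b" "norm b = e" for a b
  proof -
    have sv: "suppT T (v + a)" "suppT T (v + b)" "suppT T (v + a + b)" using v a b by (auto simp: suppT_def)
    have "norm (v + a + b - v) \<le> norm a + norm b" by (simp add: norm_triangle_ineq)
    then have n1: "norm (v + a + b - v) < \<delta>" using a b d by (simp add: e_def)
    have n2: "norm (v + a - v) < \<delta>" "norm (v + b - v) < \<delta>" "norm (v - v) < \<delta>"
      using a b d by (auto simp: e_def)
    show ?thesis unfolding Qf_Rk[of a b v]
      by (intro vec.span_add vec.span_diff H sv v n1 n2)
  qed
  let ?c = "complex_of_real e"
  have s1: "suppT T (axis t ?c)" "suppT T (axis s ?c)" "suppT T (axis s (\<i> * ?c))"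
    using ts by (auto simp: suppT_def axis_def)
  have nn: "norm (axis t ?c) = e" "norm (axis s ?c) = e" "norm (axis s (\<i> * ?c)) = e"
    using e0 by (auto simp: norm_axis_gen norm_mult)
  have Q1: "Qf (axis t ?c) (axis s ?c) \<in> vec.span B" using Qin s1 nn by blast
  have Q2: "Qf (axis t ?c) (axis s (\<i> * ?c)) \<in> vec.span B" using Qin s1 nn by blast
  have "E = (1 / (2 * ?c * ?c)) *s (Qf (axis t ?c) (axis s ?c) + \<i> *s Qf (axis t ?c) (axis s (\<i> * ?c)))"
    using e0 unfolding E by (auto simp: vec_eq_iff Qf_def axis_def field_simps)
  also have "\<dots> \<in> vec.span B" by (intro vec.span_scale vec.span_add Q1 Q2)
  finally show "E \<in> vec.span B" .
qed

lemma greedy: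
  fixes X :: "complex^'n::finite^'n" and J :: "'n set"
  assumes X: "\<And>p. suppT T (X$p)" and d: "\<delta> > 0"
  shows "finite J \<Longrightarrow> card J \<le> card T * card T \<Longrightarrow> \<exists>Y. (\<forall>p. suppT T (Y$p)) \<and> (\<forall>p. norm (Y$p - X$p) < \<delta>)
     \<and> inj_on (\<lambda>j. Rk (Y$j)) J \<and> vec.independent ((\<lambda>j. Rk (Y$j)) ` J)"
proof (induction J rule: finite_induct)
  case empty
  show ?case by (intro exI[of _ X]) (use X d vec.independent_empty in auto)
next
  case (insert j J)
  then have cJ: "card J < card T * card T" by simp
  obtain Y :: "complex^'n^'n" where Ys: "\<forall>p. suppT T (Y$p)" and Yn: "\<forall>p. norm (Y$p - X$p) < \<delta>"
    and Yi: "inj_on (\<lambda>j. Rk (Y$j)) J" and Yind: "vec.independent ((\<lambda>j. Rk (Y$j)) ` J)"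
    using insert.IH[OF less_imp_le[OF cJ]] by (elim exE conjE) simp
  let ?B = "(\<lambda>j. Rk (Y$j)) ` J"
  have fJ: "finite J" by fact
  have "\<exists>x. suppT T x \<and> norm (x - X$j) < \<delta> \<and> Rk x \<notin> vec.span ?B"
  proof (rule ccontr)
    assume nt: "\<not> ?thesis"
    have H: "Rk x \<in> vec.span ?B" if "suppT T x" "norm (x - X$j) < \<delta>" for x
      using nt that by blast
    have "Ebasis T \<subseteq> vec.span ?B" by (rule near_rank_one[OF X[of j] d H])
    then have "card (Ebasis T) \<le> card ?B"
      using vec.independent_span_bound[OF _ Ebasis_indep] by (metis finite_imageI fJ)
    also have "\<dots> \<le> card J" by (rule card_image_le) simp
    finally show False using cJ Ebasis_card[of T] by linarith
  qed
  then obtain x where xs: "suppT T x" and xn: "norm (x - X$j) < \<delta>" and xsp: "Rk x \<notin> vec.span ?B"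
    by blast
  define Y' where "Y' = (\<chi> p. if p = j then x else Y$p)"
  have YJ: "Y'$i = Y$i" if "i \<in> J" for i
  proof -
    have "i \<noteq> j" using that insert(2) by blast
    then show ?thesis by (simp add: Y'_def)
  qed
  have Yj: "Y'$j = x" by (simp add: Y'_def)
  have imgJ: "(\<lambda>i. Rk (Y'$i)) ` J = ?B" by (rule image_cong[OF refl]) (simp add: YJ)
  have img: "(\<lambda>i. Rk (Y'$i)) ` insert j J = insert (Rk x) ?B"
    by (simp only: image_insert imgJ Yj)
  have notin: "Rk x \<notin> ?B" using xsp by (metis vec.span_base)
  show ?case
  proof (intro exI[of _ Y'] conjI allI)
    show "suppT T (Y'$p)" for p
      by (cases "p = j") (simp_all add: Y'_def xs Ys)
    show "norm (Y'$p - X$p) < \<delta>" for p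
      by (cases "p = j") (simp_all add: Y'_def xn Yn)
    show "inj_on (\<lambda>i. Rk (Y'$i)) (insert j J)"
    proof -
      have i1: "inj_on (\<lambda>i. Rk (Y'$i)) J"
        using Yi by (rule inj_on_cong[THEN iffD2, rotated]) (simp add: YJ)
      have Jj: "J - {j} = J" using insert(2) by blast
      have "Rk (Y'$j) \<notin> (\<lambda>i. Rk (Y'$i)) ` (J - {j})"
        unfolding Jj imgJ Yj by (rule notin)
      with i1 show ?thesis by (simp only: inj_on_insert) simp
    qed
    show "vec.independent ((\<lambda>i. Rk (Y'$i)) ` insert j J)"
      unfolding img using Yind xsp by (rule vec.independent_insertI[rotated])
  qed
qed

lemma greedy_full:
  fixes X :: "complex^'n::finite^'n" and T :: "'n set"
  assumes X: "\<And>p. suppT T (X$p)" and d: "\<delta> > 0" and cT: "card T * card T \<le> CARD('n)"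
  shows "\<exists>Y. (\<forall>p. suppT T (Y$p)) \<and> (\<forall>p. norm (Y$p - X$p) < \<delta>)
     \<and> Ebasis T \<subseteq> vec.span (range (\<lambda>j. Rk (Y$j)))"
proof -
  obtain J :: "'n set" where J: "card J = card T * card T"
    using obtain_subset_with_card_n[of "card T * card T" "UNIV :: 'n set"] cT by auto
  have fJ: "finite J" by simp
  obtain Y :: "complex^'n^'n" where Ys: "\<forall>p. suppT T (Y$p)" and Yn: "\<forall>p. norm (Y$p - X$p) < \<delta>"
    and Yi: "inj_on (\<lambda>j. Rk (Y$j)) J" and Yind: "vec.independent ((\<lambda>j. Rk (Y$j)) ` J)"
    using greedy[OF X d fJ order.eq_iff[THEN iffD1, OF J, THEN conjunct1]] by (elim exE conjE) simp_all
  let ?B = "(\<lambda>j. Rk (Y$j)) ` J"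
  have cB: "card ?B = card T * card T" using card_image[OF Yi] J by simp
  have Bsub: "?B \<subseteq> vec.span (Ebasis T)"
  proof (rule image_subsetI)
    fix j show "Rk (Y$j) \<in> vec.span (Ebasis T)" using Ys by (simp add: Rk_in_span_Ebasis)
  qed
  have fE: "finite (Ebasis T)" by (simp add: Ebasis_def)
  have "Ebasis T \<subseteq> vec.span ?B"
  proof
    fix E assume E: "E \<in> Ebasis T"
    show "E \<in> vec.span ?B"
    proof (rule ccontr)
      assume nE: "E \<notin> vec.span ?B"
      have ind: "vec.independent (insert E ?B)" by (rule vec.independent_insertI[OF nE Yind])
      have sub: "insert E ?B \<subseteq> vec.span (Ebasis T)"
        using Bsub vec.span_base[OF E] by (rule insert_subsetI[rotated])
      have "card (insert E ?B) \<le> card (Ebasis T)"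
        using vec.independent_span_bound[OF fE ind sub] by (rule conjunct2)
      moreover have "E \<notin> ?B" using nE by (metis vec.span_base)
      moreover have "finite ?B" by simp
      ultimately show False using cB Ebasis_card[of T] by simp
    qed
  qed
  also have "vec.span ?B \<subseteq> vec.span (range (\<lambda>j. Rk (Y$j)))" by (rule vec.span_mono) auto
  finally have "Ebasis T \<subseteq> vec.span (range (\<lambda>j. Rk (Y$j)))" .
  then show ?thesis using Ys Yn by (intro exI[of _ Y]) simp
qed

context goodU begin

definition ucol :: "'n \<Rightarrow> complex^('n \<times> 'n)" where
  "ucol t = (\<chi> c. if fst c = snd c then U$(fst c)$t else 0)"

lemma rank_Fm: "rank (Fm U) = card T"
proof -
  let ?n = "of_nat CARD('n) :: complex"
  have n0: "?n \<noteq> 0" by simp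
  obtain W where W1: "\<And>s t. s \<in> T \<Longrightarrow> t \<in> T \<Longrightarrow> (\<Sum>j\<in>UNIV. U$j$s * W j t) = (if s = t then 1 else 0)"
    and W0: "\<And>j t. t \<notin> T \<Longrightarrow> W j t = 0"
    using W_exists by blast
  have finT: "finite T" by simp
  have rowpp: "row (p,p) (Fm U) = (\<Sum>t\<in>T. (cnj (U$p$t) / ?n) *s ucol t)" for p
  proof -
    have "row (p,p) (Fm U) = (\<Sum>t\<in>UNIV. (cnj (U$p$t) / ?n) *s ucol t)"
      by (simp add: row_def vec_eq_iff Fm_def Gm_def ucol_def sum_divide_distrib algebra_simps
            if_distrib[of "\<lambda>x. _ * x"] cong: if_cong)
    also have "\<dots> = (\<Sum>t\<in>T. (cnj (U$p$t) / ?n) *s ucol t)"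
      by (rule sum.mono_neutral_right) (auto simp: supp)
    finally show ?thesis .
  qed
  have rowoff: "row r (Fm U) = 0" if "fst r \<noteq> snd r" for r
    using that by (simp add: row_def vec_eq_iff Fm_off1)
  have sub1: "rows (Fm U) \<subseteq> vec.span (ucol ` T)"
  proof
    fix v assume "v \<in> rows (Fm U)"
    then obtain r where v: "v = row r (Fm U)" by (auto simp: rows_def)
    show "v \<in> vec.span (ucol ` T)"
    proof (cases "fst r = snd r")
      case True
      then obtain p where rp: "r = (p,p)" by (metis prod.collapse)
      show ?thesis unfolding v rp rowpp
        by (intro vec.span_sum vec.span_scale vec.span_base) auto
    next
      case False
      show ?thesis unfolding v rowoff[OF False] by (rule vec.span_zero)
    qed
  qed
  have ucol_repr: "ucol t = (\<Sum>p\<in>UNIV. (?n * cnj (W p t)) *s row (p,p) (Fm U))" if t: "t \<in> T" for t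
  proof -
    have "(\<Sum>p\<in>UNIV. (?n * cnj (W p t)) *s row (p,p) (Fm U)) $ c = ucol t $ c" for c
    proof (cases "fst c = snd c")
      case True
      then obtain q where c: "c = (q,q)" by (metis prod.collapse)
      have "(\<Sum>p\<in>UNIV. (?n * cnj (W p t)) *s row (p,p) (Fm U)) $ c
          = (\<Sum>p\<in>UNIV. \<Sum>s\<in>UNIV. cnj (U$p$s * W p t) * U$q$s)"
        unfolding c using n0 by (simp add: row_def Fm_def Gm_def sum_distrib_left sum_divide_distrib algebra_simps)
      also have "\<dots> = (\<Sum>s\<in>UNIV. cnj (\<Sum>p\<in>UNIV. U$p$s * W p t) * U$q$s)"
        by (subst sum.swap) (simp add: sum_distrib_right)
      also have "\<dots> = (\<Sum>s\<in>UNIV. if s = t then U$q$s else 0)"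
      proof (rule sum.cong[OF refl])
        fix s show "cnj (\<Sum>p\<in>UNIV. U$p$s * W p t) * U$q$s = (if s = t then U$q$s else 0)"
        proof (cases "s \<in> T")
          case True then show ?thesis using W1[OF True t] by auto
        next
          case False then show ?thesis using supp[OF False, of q] t by auto
        qed
      qed
      also have "\<dots> = ucol t $ c" by (simp add: ucol_def c)
      finally show ?thesis .
    next
      case False
      then show ?thesis by (simp add: ucol_def row_def Fm_off2)
    qed
    then show ?thesis by (simp add: vec_eq_iff)
  qed
  have sub2: "ucol ` T \<subseteq> vec.span (rows (Fm U))"
  proof clarify
    fix t assume t: "t \<in> T"
    show "ucol t \<in> vec.span (rows (Fm U))" unfolding ucol_repr[OF t]
      by (intro vec.span_sum vec.span_scale vec.span_base) (auto simp: rows_def)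
  qed
  have inj: "inj_on ucol T"
  proof (rule inj_onI)
    fix t t' assume t: "t \<in> T" and t': "t' \<in> T" and e: "ucol t = ucol t'"
    have "U$q$t = U$q$t'" for q using arg_cong[where f="\<lambda>v. v $ (q,q)", OF e] by (simp add: ucol_def)
    then have "(\<Sum>j\<in>UNIV. U$j$t * W j t) = (\<Sum>j\<in>UNIV. U$j$t' * W j t)" by simp
    then show "t = t'" using W1[OF t t] W1[OF t' t] by (auto split: if_splits)
  qed
  have indep: "vec.independent (ucol ` T)"
  proof (rule vec.independent_if_scalars_zero)
    show "finite (ucol ` T)" by simp
    fix f x assume s: "(\<Sum>x\<in>ucol ` T. f x *s x) = 0" and x: "x \<in> ucol ` T"
    then obtain t0 where t0: "t0 \<in> T" "x = ucol t0" by blast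
    have s': "(\<Sum>t\<in>T. f (ucol t) *s ucol t) = 0" using s by (simp add: sum.reindex[OF inj])
    have q: "(\<Sum>t\<in>T. f (ucol t) * U$q$t) = 0" for q
      using arg_cong[where f="\<lambda>v. v $ (q,q)", OF s'] by (simp add: ucol_def)
    have "0 = (\<Sum>q\<in>UNIV. (\<Sum>t\<in>T. f (ucol t) * U$q$t) * W q t0)" using q by simp
    also have "\<dots> = (\<Sum>t\<in>T. f (ucol t) * (\<Sum>q\<in>UNIV. U$q$t * W q t0))"
      by (simp add: sum_distrib_left sum_distrib_right algebra_simps) (rule sum.swap)
    also have "\<dots> = (\<Sum>t\<in>T. if t = t0 then f (ucol t) else 0)"
      by (rule sum.cong) (use W1 t0 in auto)
    also have "\<dots> = f x" using t0 by simp
    finally show "f x = 0" by simp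
  qed
  have "vec.span (rows (Fm U)) = vec.span (ucol ` T)"
    using sub1 sub2 vec.span_mono vec.span_span by (metis subset_antisym)
  then have "rank (Fm U) = vec.dim (ucol ` T)"
    unfolding row_rank_def_gen by (metis vec.dim_span)
  also have "\<dots> = card (ucol ` T)" by (rule vec.dim_eq_card_independent[OF indep])
  also have "\<dots> = card T" by (rule card_image[OF inj])
  finally show ?thesis .
qed

end

definition nrm :: "complex^'n::finite \<Rightarrow> complex^'n" where
  "nrm x = (\<chi> t. x$t / complex_of_real (norm x))"

definition FF :: "complex^'n::finite^'n \<Rightarrow> 'n tmat" where
  "FF Y = Fm (\<chi> p. nrm (Y$p))"

lemma nrm_scaleR: "nrm x = inverse (norm x) *\<^sub>R x"
  by (simp add: nrm_def vec_eq_iff scaleR_conv_of_real[where 'a=complex] divide_inverse mult.commute)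

lemma nrm_unit: "x \<noteq> 0 \<Longrightarrow> norm (nrm x) = 1"
  by (simp add: nrm_scaleR)

lemma nrm_one: "norm x = 1 \<Longrightarrow> nrm x = x"
  by (simp add: nrm_scaleR)

lemma nrm_zero_coord: "x$t = 0 \<Longrightarrow> nrm x $ t = 0"
  by (simp add: nrm_def)

lemma Rk_nrm: "Rk x = complex_of_real ((norm x)^2) *s Rk (nrm x)"
proof (cases "x = 0")
  case True then show ?thesis by (simp add: Rk_def vec_eq_iff)
next
  case False
  then have n0: "complex_of_real (norm x) \<noteq> 0" by simp
  show ?thesis using n0 by (simp add: Rk_def nrm_def vec_eq_iff power2_eq_square field_simps)
qed

lemma FF_cont:
  fixes X :: "complex^'n::finite^'n"
  assumes "\<And>p. X$p \<noteq> 0"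
  shows "isCont FF X"
  unfolding isCont_def FF_def Fm_def Gm_def nrm_def
proof (intro tendsto_vec_lambda)
  fix r c :: "'n \<times> 'n"
  show "((\<lambda>Y. if fst r = snd r \<and> fst c = snd c then (\<Sum>t\<in>UNIV. cnj ((\<chi> p. \<chi> t. Y $ p $ t / complex_of_real (norm (Y $ p))) $ fst r $ t) *
                (\<chi> p. \<chi> t. Y $ p $ t / complex_of_real (norm (Y $ p))) $ fst c $ t) / of_nat CARD('n) else 0) \<longlongrightarrow>
        (if fst r = snd r \<and> fst c = snd c then (\<Sum>t\<in>UNIV. cnj ((\<chi> p. \<chi> t. X $ p $ t / complex_of_real (norm (X $ p))) $ fst r $ t) *
                (\<chi> p. \<chi> t. X $ p $ t / complex_of_real (norm (X $ p))) $ fst c $ t) / of_nat CARD('n) else 0)) (at X)"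
    by (cases "fst r = snd r \<and> fst c = snd c") (auto intro!: tendsto_intros simp: assms)
qed

lemma norm_le_rows: "norm (Y::complex^'n::finite^'m::finite) \<le> (\<Sum>p\<in>UNIV. norm (Y$p))"
  unfolding norm_vec_def[of Y] by (rule L2_set_le_sum) simp

lemma outer_sum_entry: "(\<Sum>t\<in>T. outer (w t)) $ r $ c = (\<Sum>t\<in>T. w t $ r * cnj (w t $ c))"
  by (simp add: outer_def)

theorem theorem3p4:
  fixes a :: nat
  assumes "a^2 \<le> CARD('n::finite)"
  shows "{D \<in> (diagonal_states :: 'n tmat set). rank D \<le> a}
           \<subseteq> closure {D \<in> (diagonal_states :: 'n tmat set). D extreme_point_of Gamma \<and> rank D = a}"
proof
  fix D :: "'n tmat"
  assume "D \<in> {D \<in> (diagonal_states :: 'n tmat set). rank D \<le> a}"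
  then have Dd: "D \<in> diagonal_states" and Dr: "rank D \<le> a" by auto
  have DG: "D \<in> Gamma" using Dd by (simp add: diagonal_states_def)
  then have Dp: "psd D" and Dt: "trace D = 1" by (auto simp: Gamma_def density_def)
  let ?n = "CARD('n)"
  have a0: "a \<noteq> 0"
  proof
    assume "a = 0"
    then have "D = 0" using Dr rank_zero_mat by auto
    then show False using Dt by (simp add: trace_def)
  qed
  have aa: "a * a \<le> ?n" using assms by (simp add: power2_eq_square)
  have an: "a \<le> ?n" using aa a0 by (metis le_trans mult_le_mono1 mult_1 not_less_eq_eq nat_mult_1 One_nat_def le_less nat_less_le less_one)
  obtain T :: "'n set" where cT: "card T = a"
    using obtain_subset_with_card_n[of a "UNIV :: 'n set"] an by auto
  have fT: "finite T" by simp
  obtain w where Dw: "D = (\<Sum>t\<in>T. outer (w t))"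
    using psd_factor[OF fT Dp] Dr cT by auto
  have Dent: "D$r$c = (\<Sum>t\<in>T. w t $ r * cnj (w t $ c))" for r c
    unfolding Dw by (rule outer_sum_entry)
  have Dre: "D$r$r = complex_of_real (\<Sum>t\<in>T. (cmod (w t $ r))^2)" for r
    unfolding Dent sum_cnj_real[symmetric] by (rule sum.cong) (simp_all add: mult.commute)
  have woff: "w t $ (p,q) = 0" if "t \<in> T" "p \<noteq> q" for t p q
  proof -
    have "D$(p,q)$(p,q) = 0" using diagonal_state_entries(1)[OF Dd that(2)] .
    then have "complex_of_real (\<Sum>t\<in>T. (cmod (w t $ (p,q)))^2) = 0" unfolding Dre .
    then have "(\<Sum>t\<in>T. (cmod (w t $ (p,q)))^2) = 0" by (simp only: of_real_eq_0_iff)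
    then have "(cmod (w t $ (p,q)))^2 = 0" using that(1) fT by (simp add: sum_nonneg_eq_0_iff)
    then show ?thesis by simp
  qed
  define sn where "sn = complex_of_real (sqrt (real ?n))"
  have sn2: "cnj sn * sn = of_nat ?n" by (simp add: sn_def of_real_mult[symmetric])
  define X :: "complex^'n^'n" where "X = (\<chi> p t. if t \<in> T then sn * cnj (w t $ (p,p)) else 0)"
  have Xsupp: "suppT T (X$p)" for p by (simp add: suppT_def X_def)
  have GX: "Gm X p r = of_nat ?n * D$(p,p)$(r,r)" for p r
  proof -
    have "Gm X p r = (\<Sum>t\<in>UNIV. if t \<in> T then (cnj sn * sn) * (w t $ (p,p) * cnj (w t $ (r,r))) else 0)"
      unfolding Gm_def X_def by (intro sum.cong) (auto simp: algebra_simps)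
    also have "\<dots> = (\<Sum>t\<in>T. (cnj sn * sn) * (w t $ (p,p) * cnj (w t $ (r,r))))"
      by (simp add: sum.If_cases)
    also have "\<dots> = of_nat ?n * D$(p,p)$(r,r)" unfolding Dent sn2 by (simp add: sum_distrib_left)
    finally show ?thesis .
  qed
  have Xunit: "norm (X$p) = 1" for p
  proof -
    have "complex_of_real ((norm (X$p))^2) = Gm X p p" unfolding Gm_def by (simp add: sum_cnj_norm)
    also have "\<dots> = 1" unfolding GX diagonal_state_entries(2)[OF Dd] by simp
    finally have "complex_of_real ((norm (X$p))^2) = 1" .
    then have "(norm (X$p))^2 = 1" by (simp only: of_real_eq_1_iff)
    then show ?thesis using norm_ge_zero[of "X$p"] by (simp add: power2_eq_1_iff)
  qed
  have Xnz: "X$p \<noteq> 0" for p using Xunit[of p] by auto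
  have DX: "D = Fm X"
  proof -
    have "D$r$c = Fm X $ r $ c" for r c
    proof (cases "fst r = snd r \<and> fst c = snd c")
      case True
      then obtain p q where rc: "r = (p,p)" "c = (q,q)" by (metis prod.collapse)
      show ?thesis unfolding rc Fm_diag GX by simp
    next
      case False
      then have "D$r$c = 0" unfolding Dent using woff
        by (cases r; cases c) (auto intro!: sum.neutral)
      moreover have "Fm X $ r $ c = 0" using False Fm_off1 Fm_off2 by blast
      ultimately show ?thesis by simp
    qed
    then show ?thesis by (simp add: vec_eq_iff)
  qed
  have FFX: "FF X = D"
  proof -
    have "(\<chi> p. nrm (X$p)) = X" by (simp add: vec_eq_iff nrm_one Xunit)
    then show ?thesis unfolding FF_def DX by simp
  qed
  have cont: "isCont FF X" by (rule FF_cont[OF Xnz])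
  show "D \<in> closure {D \<in> (diagonal_states :: 'n tmat set). D extreme_point_of Gamma \<and> rank D = a}"
    unfolding closure_approachable
  proof (intro allI impI)
    fix e :: real assume e: "e > 0"
    obtain d0 where d0: "d0 > 0" and dH: "\<And>Y. dist Y X < d0 \<Longrightarrow> dist (FF Y) (FF X) < e"
      using cont e unfolding continuous_at_eps_delta by metis
    define d where "d = min 1 (d0 / real ?n)"
    have d: "d > 0" using d0 by (simp add: d_def)
    have cTT: "card T * card T \<le> ?n" using aa cT by simp
    obtain Y where Ys: "\<forall>p. suppT T (Y$p)" and Yn: "\<forall>p. norm (Y$p - X$p) < d"
      and Ysp: "Ebasis T \<subseteq> vec.span (range (\<lambda>j. Rk (Y$j)))"
      using greedy_full[OF Xsupp d cTT] by blast
    have Ynz: "Y$p \<noteq> 0" for p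
    proof
      assume "Y$p = 0"
      then have "norm (Y$p - X$p) = 1" using Xunit[of p] by simp
      moreover have "d \<le> 1" by (simp add: d_def)
      ultimately show False using Yn by (metis not_less)
    qed
    define U where "U = (\<chi> p. nrm (Y$p))"
    have gU: "goodU U T"
    proof
      show "norm (U$p) = 1" for p by (simp add: U_def nrm_unit Ynz)
      show "U$p$t = 0" if "t \<notin> T" for p t
        using Ys that by (simp add: U_def nrm_zero_coord suppT_def)
      show "Em t s \<in> vec.span (range (\<lambda>j. Rk (U$j)))" if "t \<in> T" "s \<in> T" for t s
      proof -
        have "range (\<lambda>j. Rk (Y$j)) \<subseteq> vec.span (range (\<lambda>j. Rk (U$j)))"
        proof clarify
          fix j
          have "Rk (Y$j) = complex_of_real ((norm (Y$j))^2) *s Rk (U$j)"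
            unfolding U_def using Rk_nrm by simp
          then show "Rk (Y$j) \<in> vec.span (range (\<lambda>j. Rk (U$j)))"
            by (simp add: vec.span_scale vec.span_base)
        qed
        then have "vec.span (range (\<lambda>j. Rk (Y$j))) \<subseteq> vec.span (range (\<lambda>j. Rk (U$j)))"
          by (metis vec.span_mono vec.span_span)
        moreover have "Em t s \<in> Ebasis T" using that by (rule Em_in_Ebasis)
        ultimately show ?thesis using Ysp by blast
      qed
    qed
    have FFY: "FF Y = Fm U" by (simp add: FF_def U_def)
    have inS: "FF Y \<in> {D \<in> (diagonal_states :: 'n tmat set). D extreme_point_of Gamma \<and> rank D = a}"
      unfolding FFY using Fm_diag_state(1)[OF goodU.unit[OF gU]] goodU.Fm_extreme[OF gU]
        goodU.rank_Fm[OF gU] cT by simp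
    have "dist Y X \<le> (\<Sum>p\<in>UNIV. norm (Y$p - X$p))"
      unfolding dist_norm using norm_le_rows[of "Y - X"] by simp
    also have "\<dots> < (\<Sum>p::'n\<in>UNIV. d)"
      using sum_strict_mono[of "UNIV::'n set" "\<lambda>p. norm (Y$p - X$p)" "\<lambda>p. d"] Yn by simp
    also have "\<dots> = real ?n * d" by simp
    also have "\<dots> \<le> d0"
    proof -
      have np: "real ?n > 0" by simp
      have "real ?n * d \<le> real ?n * (d0 / real ?n)"
        using np by (intro mult_left_mono) (auto simp: d_def)
      also have "\<dots> = d0" using np by simp
      finally show ?thesis .
    qed
    finally have "dist Y X < d0" .
    then have "dist (FF Y) D < e" using dH FFX by metis
    then show "\<exists>y\<in>{D \<in> (diagonal_states :: 'n tmat set). D extreme_point_of Gamma \<and> rank D = a}. dist y D < e"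
      using inS by blast
  qed
qed

end
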